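(* Let $\gamma$ be an oriented geodesic on the modular surface $\Sigma_{\mathrm{Mod}}$ obtained by projecting the simple closed curve $p/q\subset\Sigma_{1,1}$ via the 6-fold covering map $\Sigma_{1,1}\to\Sigma_{\mathrm{Mod}}$. Then under the covering map, $\gamma$ has six lifts in $\Sigma_{1,1}$: the curves $p/q$, $q/(q-p)$, $(p-q)/p$, and each of these three curves oriented in the opposite direction.
   Context: $\Sigma_{\mathrm{Mod}}=\mathbb{H}^2/\mathrm{PSL}(2,\mathbb{Z})$. The once-punctured torus $\Sigma_{1,1}$ is viewed as a quotient of $\mathbb{R}^2$ tiled by equilateral triangles with the vertex lattice $\Lambda$ removed, modulo the translations along two edge directions; the curve $p/q$ (coprime, $1/0$ allowed) is the projection of a line of slope $p/q$ avoiding $\Lambda$, measured with respect to the two edge directions as coordinate axes. The 6-fold covering $\Sigma_{1,1}\to\Sigma_{\mathrm{Mod}}$ is the quotient by the group generated by the rotation of order three about the centre of a triangle and the rotation of order two about the midpoint of an edge. *)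

theory Defs
  imports Complex_Main
begin

text \<open>The vertex lattice of the tiling by
equilateral triangles is spanned by the two edge directions 1 and omega = exp(2 pi i/3)
(these are the coordinate axes for measuring slopes).\<close>

definition omega :: complex where
  "omega = cis (2 * pi / 3)"

definition Lambda :: "complex set" where
  "Lambda = {of_int a + of_int b * omega | a b. True}"

definition tri_centre :: complex where
  "tri_centre = (0 + 1 + (1 + omega)) / 3"

definition rot3 :: "complex \<Rightarrow> complex" where
  "rot3 z = tri_centre + omega * (z - tri_centre)"

definition rot2 :: "complex \<Rightarrow> complex" where
  "rot2 z = 2 * (1/2) - z"

text \<open>Group of affine maps of the plane generated by the two rotations together with the
lattice translations (the translations are the deck group of the plane over the torus, so the
quotient of this group by them is the 6-element group acting on the punctured torus).  Since
every generator has an inverse that is a product of generators, closure under composition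
gives the generated group.\<close>

inductive_set deck_group :: "(complex \<Rightarrow> complex) set" where
  dg_id: "id \<in> deck_group"
| dg_rot3: "rot3 \<in> deck_group"
| dg_rot2: "rot2 \<in> deck_group"
| dg_transl: "l \<in> Lambda \<Longrightarrow> (\<lambda>z. z + l) \<in> deck_group"
| dg_comp: "f \<in> deck_group \<Longrightarrow> g \<in> deck_group \<Longrightarrow> f \<circ> g \<in> deck_group"

text \<open>An oriented line in the plane avoiding the lattice that projects to the oriented curve
p/q: coprime p q, and the line runs (positively) in the direction q * 1 + p * omega, i.e.
has slope p/q in the coordinates given by the two edge directions.\<close>

definition oriented_slope_line :: "(real \<Rightarrow> complex) \<Rightarrow> int \<Rightarrow> int \<Rightarrow> bool" where
  "oriented_slope_line l p q \<longleftrightarrow> coprime p q \<and>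
     (\<exists>z0 c. c > 0 \<and>
        l = (\<lambda>t. z0 + complex_of_real (c * t) * (of_int q + of_int p * omega)) \<and>
        (\<forall>t. l t \<notin> Lambda))"

end

theory Submission
  imports Defs
begin

lemma omega_eq: "omega = Complex (-1/2) (sqrt 3 / 2)"
  unfolding omega_def by (simp add: cis.ctr cos_120 sin_120)

lemma omega_sq: "omega * omega = -1 - omega"
  by (simp add: omega_eq complex_eq_iff field_simps)

lemma omega_cube: "omega ^ 3 = 1"
proof -
  have "omega ^ 3 = omega * (omega * omega)" by (simp add: power3_eq_cube)
  also have "\<dots> = omega * (-1 - omega)" by (simp only: omega_sq)
  also have "\<dots> = - omega - omega * omega" by (simp add: algebra_simps)
  also have "\<dots> = 1" by (simp only: omega_sq) simp
  finally show ?thesis .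
qed

lemma lin_indep:
  fixes x y :: real
  assumes "complex_of_real x + complex_of_real y * omega = 0"
  shows "x = 0 \<and> y = 0"
  using assms by (simp add: omega_eq complex_eq_iff)

lemma Lambda_iff: "z \<in> Lambda \<longleftrightarrow> (\<exists>a b. z = of_int a + of_int b * omega)"
  unfolding Lambda_def by auto

lemma Lambda_add: "x \<in> Lambda \<Longrightarrow> y \<in> Lambda \<Longrightarrow> x + y \<in> Lambda"
proof -
  assume "x \<in> Lambda" "y \<in> Lambda"
  then obtain a b c d where "x = of_int a + of_int b * omega" "y = of_int c + of_int d * omega"
    unfolding Lambda_iff by blast
  then have "x + y = of_int (a + c) + of_int (b + d) * omega" by (simp add: algebra_simps)
  then show ?thesis unfolding Lambda_iff by blast
qed

lemma Lambda_uminus: "x \<in> Lambda \<Longrightarrow> - x \<in> Lambda"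
proof -
  assume "x \<in> Lambda"
  then obtain a b where "x = of_int a + of_int b * omega"
    unfolding Lambda_iff by blast
  then have "- x = of_int (- a) + of_int (- b) * omega" by (simp add: algebra_simps)
  then show ?thesis unfolding Lambda_iff by blast
qed

lemma Lambda_diff: "x \<in> Lambda \<Longrightarrow> y \<in> Lambda \<Longrightarrow> x - y \<in> Lambda"
  using Lambda_add[OF _ Lambda_uminus, of x y] by simp

lemma Lambda_one: "1 \<in> Lambda"
  unfolding Lambda_iff by (rule exI[of _ 1], rule exI[of _ 0]) simp

lemma Lambda_omega: "x \<in> Lambda \<Longrightarrow> omega * x \<in> Lambda"
proof -
  assume "x \<in> Lambda"
  then obtain a b where x: "x = of_int a + of_int b * omega" unfolding Lambda_iff by blast
  have "omega * x = of_int (-b) + of_int (a - b) * omega"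
      proof -
    have "omega * x = of_int a * omega + of_int b * (omega * omega)" unfolding x by (simp add: algebra_simps)
    also have "\<dots> = of_int (-b) + of_int (a - b) * omega" unfolding omega_sq by (simp add: algebra_simps)
    finally show ?thesis .
  qed
  then show ?thesis unfolding Lambda_iff by blast
qed


lemma Lambda_zero: "0 \<in> Lambda"
  using Lambda_diff[OF Lambda_one Lambda_one] by simp

lemma Lambda_omega_pow: "x \<in> Lambda \<Longrightarrow> omega ^ k * x \<in> Lambda"
  by (induction k) (auto simp: mult.assoc intro: Lambda_omega)

lemma Lambda_sign: "s = 1 \<or> s = -1 \<Longrightarrow> x \<in> Lambda \<Longrightarrow> s * x \<in> Lambda"
  using Lambda_uminus by auto

lemma rot3_eq: "rot3 = (\<lambda>z. omega * z + 1)"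
  by (rule ext) (simp add: rot3_def tri_centre_def omega_eq complex_eq_iff field_simps)

lemma rot2_eq: "rot2 = (\<lambda>z. - z + 1)"
  by (rule ext) (simp add: rot2_def)

lemma deck_form:
  assumes "g \<in> deck_group"
  shows "\<exists>s k lam. (s = 1 \<or> s = -1) \<and> lam \<in> Lambda \<and> g = (\<lambda>z. s * omega ^ k * z + lam)"
  using assms
proof induction
  case dg_id
  show ?case by (rule exI[of _ 1], rule exI[of _ 0], rule exI[of _ 0]) (auto simp: Lambda_zero)
next
  case dg_rot3
  show ?case by (rule exI[of _ 1], rule exI[of _ 1], rule exI[of _ 1]) (auto simp: Lambda_one rot3_eq)
next
  case dg_rot2
  show ?case by (rule exI[of _ "-1"], rule exI[of _ 0], rule exI[of _ 1]) (auto simp: Lambda_one rot2_eq)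
next
  case (dg_transl l)
  show ?case by (rule exI[of _ 1], rule exI[of _ 0], rule exI[of _ l]) (auto simp: dg_transl)
next
  case (dg_comp f g)
  from dg_comp.IH(1) obtain s1 k1 l1 where 1: "s1 = 1 \<or> s1 = -1" "l1 \<in> Lambda" "f = (\<lambda>z. s1 * omega ^ k1 * z + l1)" by blast
  from dg_comp.IH(2) obtain s2 k2 l2 where 2: "s2 = 1 \<or> s2 = -1" "l2 \<in> Lambda" "g = (\<lambda>z. s2 * omega ^ k2 * z + l2)" by blast
  have "f \<circ> g = (\<lambda>z. (s1 * s2) * omega ^ (k1 + k2) * z + (s1 * (omega ^ k1 * l2) + l1))"
    using 1 2 by (auto simp: fun_eq_iff algebra_simps power_add)
  moreover have "s1 * s2 = 1 \<or> s1 * s2 = -1" using 1 2 by auto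
  moreover have "s1 * (omega ^ k1 * l2) + l1 \<in> Lambda"
    by (rule Lambda_add[OF Lambda_sign[OF 1(1) Lambda_omega_pow[OF 2(2)]] 1(2)])
  ultimately show ?case by blast
qed

lemma deck_inv:
  assumes "g \<in> deck_group" "g z \<in> Lambda"
  shows "z \<in> Lambda"
proof -
  from deck_form[OF assms(1)] obtain s k lam where f: "s = 1 \<or> s = -1" "lam \<in> Lambda"
    "g = (\<lambda>z. s * omega ^ k * z + lam)" by blast
  have w: "s * omega ^ k * z + lam \<in> Lambda" using assms(2) f by simp
  have "omega ^ (3 * k) = 1" by (simp add: power_mult omega_cube)
  then have o: "omega ^ (2 * k) * omega ^ k = 1" by (simp add: power_add[symmetric])
  have ss: "s * s = 1" using f(1) by auto
  have "s * omega ^ (2 * k) * (s * omega ^ k * z + lam - lam) = (s * s) * (omega ^ (2 * k) * omega ^ k) * z"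
    by (simp add: ac_simps)
  then have "s * omega ^ (2 * k) * (s * omega ^ k * z + lam - lam) = z"
    using o ss by simp
  moreover have "s * omega ^ (2 * k) * (s * omega ^ k * z + lam - lam) \<in> Lambda"
    using Lambda_sign[OF f(1) Lambda_omega_pow[OF Lambda_diff[OF w f(2)]]] by (simp only: mult.assoc)
  ultimately show ?thesis by metis
qed

lemma transfer:
  assumes "g \<in> deck_group" "oriented_slope_line l p q" "\<And>z. g z = u * z + lam"
    "u * (of_int q + of_int p * omega) = of_int b + of_int a * omega" "coprime a b"
  shows "oriented_slope_line (g \<circ> l) a b"
proof -
  from assms(2) obtain z0 c where c: "c > 0" "l = (\<lambda>t. z0 + complex_of_real (c * t) * (of_int q + of_int p * omega))"
    "\<forall>t. l t \<notin> Lambda" unfolding oriented_slope_line_def by blast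
  have e: "g \<circ> l = (\<lambda>t. (u * z0 + lam) + complex_of_real (c * t) * (of_int b + of_int a * omega))"
  proof (rule ext)
    fix t
    have "(g \<circ> l) t = u * (z0 + complex_of_real (c * t) * (of_int q + of_int p * omega)) + lam"
      using c(2) assms(3) by simp
    also have "\<dots> = (u * z0 + lam) + complex_of_real (c * t) * (u * (of_int q + of_int p * omega))"
      by (simp add: distrib_left ac_simps)
    finally show "(g \<circ> l) t = (u * z0 + lam) + complex_of_real (c * t) * (of_int b + of_int a * omega)"
      using assms(4) by simp
  qed
  have nl: "\<forall>t. (g \<circ> l) t \<notin> Lambda" using c(3) deck_inv[OF assms(1)] by auto
  have "\<exists>z0 c. c > 0 \<and> g \<circ> l = (\<lambda>t. z0 + complex_of_real (c * t) * (of_int b + of_int a * omega))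
     \<and> (\<forall>t. (g \<circ> l) t \<notin> Lambda)"
    by (intro exI conjI) (rule c(1), rule e, rule nl)
  then show ?thesis unfolding oriented_slope_line_def using assms(5) by (intro conjI)
qed

lemma coprime_lin:
  fixes p q P Q :: int
  assumes "coprime p q" "P = x*p + y*q" "Q = z*p + w*q" "p = x'*P + y'*Q" "q = z'*P + w'*Q"
  shows "coprime P Q"
proof (rule coprimeI)
  fix d assume "d dvd P" "d dvd Q"
  then have "d dvd x'*P + y'*Q" "d dvd z'*P + w'*Q" by (simp_all add: dvd_add dvd_mult)
  then have "d dvd p" "d dvd q" using assms(4,5) by simp_all
  then show "is_unit d" using assms(1) coprime_common_divisor by blast
qed

lemma integrality:
  fixes a b a' b' :: int and r :: real
  assumes "coprime a b" "coprime a' b'" "r > 0" "real_of_int a = r * of_int a'" "real_of_int b = r * of_int b'"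
  shows "a = a' \<and> b = b'"
proof -
  obtain x y where xy: "x * a' + y * b' = gcd a' b'" using bezout_int by blast
  then have xy1: "x * a' + y * b' = 1" using assms(2) by simp
  define m where "m = x * a + y * b"
  have "real_of_int m = r * real_of_int (x * a' + y * b')"
    unfolding m_def using assms(4,5) by (simp add: algebra_simps)
  then have rm: "r = real_of_int m" using xy1 by simp
  then have "m > 0" using assms(3) by simp
  have am: "a = m * a'" "b = m * b'" using assms(4,5) rm by (simp_all add: of_int_mult[symmetric] del: of_int_mult)
  then have "m dvd a" "m dvd b" by auto
  then have "is_unit m" using assms(1) coprime_common_divisor by blast
  then have "m = 1" using \<open>m > 0\<close> by simp
  then show ?thesis using am by simp
qed


lemma rot_omega: "omega * (of_int b + of_int a * omega) = of_int (-a) + of_int (b - a) * omega"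
proof -
  have "omega * (of_int b + of_int a * omega) = of_int b * omega + of_int a * (omega * omega)"
    by (simp add: algebra_simps)
  also have "\<dots> = of_int (-a) + of_int (b - a) * omega" unfolding omega_sq by (simp add: algebra_simps)
  finally show ?thesis .
qed

lemma omega_pow_mod: "omega ^ k = omega ^ (k mod 3)"
proof -
  have "omega ^ k = (omega ^ 3) ^ (k div 3) * omega ^ (k mod 3)"
    by (simp add: power_mult[symmetric] power_add[symmetric])
  then show ?thesis by (simp add: omega_cube)
qed

definition six :: "int \<Rightarrow> int \<Rightarrow> (int \<times> int) set" where
  "six p q = {(p, q), (-p, -q), (q, q - p), (-q, p - q), (p - q, p), (q - p, -p)}"

lemma unit_image:
  assumes "s = 1 \<or> s = -1"
  shows "\<exists>a b. (a, b) \<in> six p q \<and>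
     s * omega ^ k * (of_int q + of_int p * omega) = of_int b + of_int a * omega"
proof -
  have r1: "omega * (of_int q + of_int p * omega) = of_int (-p) + of_int (q - p) * omega"
    by (rule rot_omega)
  have r2: "omega ^ 2 * (of_int q + of_int p * omega) = of_int (p - q) + of_int (- q) * omega"
    using rot_omega[of "-p" "q - p"] by (simp add: power2_eq_square mult.assoc r1)
  have neg: "- (of_int b + of_int a * omega) = of_int (-b) + of_int (-a) * omega" for a b :: int
    by simp
  have "k mod 3 = 0 \<or> k mod 3 = 1 \<or> k mod 3 = 2" by auto
  then obtain a0 b0 where ab0: "(a0, b0) \<in> six p q" "(-a0, -b0) \<in> six p q"
    "omega ^ k * (of_int q + of_int p * omega) = of_int b0 + of_int a0 * omega"
  proof (elim disjE)
    assume "k mod 3 = 0"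
    then have "omega ^ k = 1" using omega_pow_mod[of k] by simp
    then show ?thesis using that[of p q] by (simp add: six_def)
  next
    assume "k mod 3 = 1"
    then have "omega ^ k = omega" using omega_pow_mod[of k] by simp
    then show ?thesis using that[of "q - p" "-p"] r1 by (simp add: six_def)
  next
    assume "k mod 3 = 2"
    then have "omega ^ k = omega ^ 2" using omega_pow_mod[of k] by simp
    then show ?thesis using that[of "-q" "p - q"] r2 by (simp add: six_def)
  qed
  show ?thesis using assms
  proof (elim disjE)
    assume "s = 1"
    then show ?thesis using ab0 by (intro exI[of _ a0] exI[of _ b0]) simp
  next
    assume "s = -1"
    then have "s * omega ^ k * (of_int q + of_int p * omega) = of_int (-b0) + of_int (-a0) * omega"
      using ab0(3) neg by (simp add: mult.assoc)
    then show ?thesis using ab0 by (intro exI[of _ "-a0"] exI[of _ "-b0"]) simp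
  qed
qed

lemma six_coprime:
  assumes "coprime p q" "(a, b) \<in> six p q"
  shows "coprime a b"
proof -
  have c1: "coprime (-p) (-q)" using assms(1) by simp
  have c2: "coprime q (q - p)"
    by (rule coprime_lin[OF assms(1), where x=0 and y=1 and z="-1" and w=1 and x'=1 and y'="-1" and z'=1 and w'=0]) simp_all
  have c3: "coprime (-q) (p - q)"
    by (rule coprime_lin[OF assms(1), where x=0 and y="-1" and z="1" and w="-1" and x'="-1" and y'="1" and z'="-1" and w'=0]) simp_all
  have c4: "coprime (p - q) p"
    by (rule coprime_lin[OF assms(1), where x=1 and y="-1" and z="1" and w="0" and x'="0" and y'="1" and z'="-1" and w'=1]) simp_all
  have c5: "coprime (q - p) (-p)"
    by (rule coprime_lin[OF assms(1), where x="-1" and y="1" and z="-1" and w="0" and x'="0" and y'="-1" and z'="1" and w'="-1"]) simp_all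
  show ?thesis using assms c1 c2 c3 c4 c5 by (auto simp: six_def)
qed

lemma six_card:
  assumes "coprime p q"
  shows "card (six p q) = 6"
proof -
  have nz: "p \<noteq> 0 \<or> q \<noteq> 0" using assms by auto
  have d01: "(p, q) \<noteq> (-p, -q)" using nz by simp presburger?
  have d02: "(p, q) \<noteq> (q, q - p)" using nz by simp presburger?
  have d03: "(p, q) \<noteq> (-q, p - q)" using nz by simp presburger?
  have d04: "(p, q) \<noteq> (p - q, p)" using nz by simp presburger?
  have d05: "(p, q) \<noteq> (q - p, -p)" using nz by simp presburger?
  have d12: "(-p, -q) \<noteq> (q, q - p)" using nz by simp presburger?
  have d13: "(-p, -q) \<noteq> (-q, p - q)" using nz by simp presburger?
  have d14: "(-p, -q) \<noteq> (p - q, p)" using nz by simp presburger?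
  have d15: "(-p, -q) \<noteq> (q - p, -p)" using nz by simp presburger?
  have d23: "(q, q - p) \<noteq> (-q, p - q)" using nz by simp presburger?
  have d24: "(q, q - p) \<noteq> (p - q, p)" using nz by simp presburger?
  have d25: "(q, q - p) \<noteq> (q - p, -p)" using nz by simp presburger?
  have d34: "(-q, p - q) \<noteq> (p - q, p)" using nz by simp presburger?
  have d35: "(-q, p - q) \<noteq> (q - p, -p)" using nz by simp presburger?
  have d45: "(p - q, p) \<noteq> (q - p, -p)" using nz by simp presburger?
  note d = d01 d02 d03 d04 d05 d12 d13 d14 d15 d23 d24 d25 d34 d35 d45
  have "card (six p q) = Suc (Suc (Suc (Suc (Suc (Suc 0)))))"
    unfolding six_def
    by (simp only: card_insert_if finite_insert finite.emptyI insert_iff empty_iff d d[symmetric]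
        simp_thms if_False card.empty)
  then show ?thesis by simp
qed


lemma sub1:
  assumes "oriented_slope_line l p q" "g \<in> deck_group" "oriented_slope_line (g \<circ> l) a b"
  shows "(a, b) \<in> six p q"
proof -
  from assms(1) obtain z0 c where cop: "coprime p q" and c: "c > 0"
    "l = (\<lambda>t. z0 + complex_of_real (c * t) * (of_int q + of_int p * omega))"
    unfolding oriented_slope_line_def by blast
  from assms(3) obtain z1 c1 where cop1: "coprime a b" and c1: "c1 > 0"
    "g \<circ> l = (\<lambda>t. z1 + complex_of_real (c1 * t) * (of_int b + of_int a * omega))"
    unfolding oriented_slope_line_def by blast
  from deck_form[OF assms(2)] obtain s k lam where f: "s = 1 \<or> s = -1" "lam \<in> Lambda"
    "g = (\<lambda>z. s * omega ^ k * z + lam)" by blast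
  from unit_image[OF f(1), where k=k and p=p and q=q] obtain a' b' where ab': "(a', b') \<in> six p q"
    "s * omega ^ k * (of_int q + of_int p * omega) = of_int b' + of_int a' * omega" by blast
  have "(g \<circ> l) 1 - (g \<circ> l) 0 = complex_of_real c1 * (of_int b + of_int a * omega)"
    using c1(2) by simp
  moreover have "(g \<circ> l) 1 - (g \<circ> l) 0 = complex_of_real c * (s * omega ^ k * (of_int q + of_int p * omega))"
    using c(2) f(3) by (simp add: algebra_simps)
  ultimately have "complex_of_real c * (of_int b' + of_int a' * omega) = complex_of_real c1 * (of_int b + of_int a * omega)"
    using ab'(2) by simp
  then have "complex_of_real (c * of_int b' - c1 * of_int b) + complex_of_real (c * of_int a' - c1 * of_int a) * omega = 0"
    by (simp add: algebra_simps)
  from lin_indep[OF this] have e: "c * of_int b' = c1 * of_int b" "c * of_int a' = c1 * of_int a" by simp_all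
  have ra: "real_of_int a = (c / c1) * of_int a'" and rb: "real_of_int b = (c / c1) * of_int b'"
    using e c1(1) by (simp_all add: field_simps)
  have cp: "coprime a' b'" by (rule six_coprime[OF cop ab'(1)])
  have "c / c1 > 0" using c(1) c1(1) by simp
  then have "a = a' \<and> b = b'" by (rule integrality[OF cop1 cp _ ra rb])
  then show ?thesis using ab'(1) by simp
qed

lemma sup1:
  assumes "oriented_slope_line l p q" "(a, b) \<in> six p q"
  shows "\<exists>g\<in>deck_group. oriented_slope_line (g \<circ> l) a b"
proof -
  have cop: "coprime p q" using assms(1) unfolding oriented_slope_line_def by blast
  have cab: "coprime a b" by (rule six_coprime[OF cop assms(2)])
  let ?v = "of_int q + of_int p * omega :: complex"
  have r1: "omega * ?v = of_int (-p) + of_int (q - p) * omega" by (rule rot_omega)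
  have r2: "omega * omega * ?v = of_int (p - q) + of_int (- q) * omega"
    using rot_omega[of "-p" "q - p"] by (simp add: mult.assoc r1)
  have g33: "rot3 \<circ> rot3 \<in> deck_group" by (intro dg_comp dg_rot3)
  have g23: "rot2 \<circ> rot3 \<in> deck_group" by (intro dg_comp dg_rot3 dg_rot2)
  have g233: "rot2 \<circ> (rot3 \<circ> rot3) \<in> deck_group" by (intro dg_comp dg_rot3 dg_rot2)
  from assms(2) consider "(a, b) = (p, q)" | "(a, b) = (-p, -q)" | "(a, b) = (q, q - p)"
    | "(a, b) = (-q, p - q)" | "(a, b) = (p - q, p)" | "(a, b) = (q - p, -p)"
    unfolding six_def by blast
  then show ?thesis
  proof cases
    case 1
    have "oriented_slope_line (id \<circ> l) a b"
      by (rule transfer[OF dg_id assms(1), where u=1 and lam=0]) (use 1 cab in simp_all)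
    then show ?thesis using dg_id by blast
  next
    case 2
    have "oriented_slope_line (rot2 \<circ> l) a b"
      by (rule transfer[OF dg_rot2 assms(1), where u="-1" and lam=1]) (use 2 cab in \<open>simp_all add: rot2_eq\<close>)
    then show ?thesis using dg_rot2 by blast
  next
    case 6
    have "oriented_slope_line (rot3 \<circ> l) a b"
      by (rule transfer[OF dg_rot3 assms(1), where u="omega" and lam=1]) (use 6 cab r1 in \<open>simp_all add: rot3_eq\<close>)
    then show ?thesis using dg_rot3 by blast
  next
    case 4
    have "oriented_slope_line ((rot3 \<circ> rot3) \<circ> l) a b"
      by (rule transfer[OF g33 assms(1), where u="omega * omega" and lam="omega + 1"])
        (simp add: rot3_eq algebra_simps, use 4 r2 in simp, rule cab)
    then show ?thesis using g33 by blast
  next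
    case 5
    have e0: "(- omega) * ?v = - (omega * ?v)" by simp
    have e: "(- omega) * ?v = of_int p + of_int (p - q) * omega" unfolding e0 r1 by (simp add: algebra_simps)
    have "oriented_slope_line ((rot2 \<circ> rot3) \<circ> l) a b"
      by (rule transfer[OF g23 assms(1), where u="- omega" and lam="0"])
        (simp add: rot3_eq rot2_eq, use 5 e in simp, rule cab)
    then show ?thesis using g23 by blast
  next
    case 3
    have e0: "(- (omega * omega)) * ?v = - (omega * omega * ?v)" by simp
    have e: "(- (omega * omega)) * ?v = of_int (q - p) + of_int q * omega" unfolding e0 r2 by (simp add: algebra_simps)
    have "oriented_slope_line ((rot2 \<circ> (rot3 \<circ> rot3)) \<circ> l) a b"
      by (rule transfer[OF g233 assms(1), where u="- (omega * omega)" and lam="- omega"])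
        (simp add: rot3_eq rot2_eq algebra_simps, use 3 e in simp, rule cab)
    then show ?thesis using g233 by blast
  qed
qed

theorem lemma5p1:
  fixes l :: "real \<Rightarrow> complex" and p q :: int
  assumes "oriented_slope_line l p q"
  shows "{(a, b). \<exists>g\<in>deck_group. oriented_slope_line (g \<circ> l) a b} =
           {(p, q), (-p, -q), (q, q - p), (-q, p - q), (p - q, p), (q - p, -p)}
         \<and> card {(p, q), (-p, -q), (q, q - p), (-q, p - q), (p - q, p), (q - p, -p)} = 6"
proof -
  have cop: "coprime p q" using assms unfolding oriented_slope_line_def by blast
  have "{(a, b). \<exists>g\<in>deck_group. oriented_slope_line (g \<circ> l) a b} = six p q"
    using sub1[OF assms] sup1[OF assms] by auto
  then show ?thesis using six_card[OF cop] unfolding six_def by simp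
qed

end
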